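(* Let $D$ be an antimatter domain. Then $D$ is a GL-domain if and only if the polynomial ring $D[X]$ is a completely atomic domain.
   Context: An atom (irreducible element) of an integral domain is a nonzero nonunit $a$ such that $a=bc$ implies $b$ or $c$ is a unit. A domain is antimatter if it has no atoms. A nonzero nonunit is atomic if it is a finite product of atoms; a domain is completely atomic if every nonunit divisor of an atomic element is atomic. A nonzero polynomial $f\in D[X]$ is primitive if the only common divisors in $D$ of its coefficients are units. $D$ is a GL-domain if the product of any two primitive polynomials in $D[X]$ is primitive. *)

theory Defs
  imports "HOL-Computational_Algebra.Polynomial" "HOL-Computational_Algebra.Factorial_Ring"
begin

text \<open>Atoms are the library notion irreducible (nonzero nonunit, any factorisation has a unit factor).\<close>

definition antimatter_domain :: "'a::idom itself \<Rightarrow> bool" where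
  "antimatter_domain _ \<longleftrightarrow> (\<nexists>a::'a. irreducible a)"

definition atomic_elem :: "'a::idom \<Rightarrow> bool" where
  "atomic_elem a \<longleftrightarrow> a \<noteq> 0 \<and> \<not> a dvd 1 \<and>
     (\<exists>xs. xs \<noteq> [] \<and> (\<forall>x\<in>set xs. irreducible x) \<and> a = prod_list xs)"

definition completely_atomic :: "'a::idom itself \<Rightarrow> bool" where
  "completely_atomic _ \<longleftrightarrow>
     (\<forall>a b::'a. atomic_elem a \<and> b dvd a \<and> \<not> b dvd 1 \<longrightarrow> atomic_elem b)"

definition primitive_poly :: "'a::idom poly \<Rightarrow> bool" where
  "primitive_poly f \<longleftrightarrow> f \<noteq> 0 \<and> (\<forall>d::'a. (\<forall>i. d dvd coeff f i) \<longrightarrow> d dvd 1)"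

definition GL_domain :: "'a::idom itself \<Rightarrow> bool" where
  "GL_domain _ \<longleftrightarrow>
     (\<forall>f g :: 'a poly. primitive_poly f \<and> primitive_poly g \<longrightarrow> primitive_poly (f * g))"

end

theory Submission
  imports Defs
begin

lemma unit_deg0: "(p::'a::idom poly) dvd 1 \<Longrightarrow> degree p = 0"
  by (auto elim: is_unit_polyE)

lemma prim_const_unit:
  assumes "primitive_poly (f::'a::idom poly)" "degree f = 0"
  shows "f dvd 1"
proof -
  obtain c where c: "f = [:c:]" using assms(2) by (rule degree_eq_zeroE)
  have "\<forall>i. c dvd coeff f i" using c by (auto simp: coeff_pCons split: nat.splits)
  then have "c dvd 1" using assms(1) unfolding primitive_poly_def by blast
  then show ?thesis using c by (simp add: is_unit_const_poly_iff)
qed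

lemma prim_dvd:
  assumes "primitive_poly (f::'a::idom poly)" "g dvd f"
  shows "primitive_poly g"
proof -
  have f0: "f \<noteq> 0" using assms(1) unfolding primitive_poly_def by blast
  have "g \<noteq> 0" using f0 assms(2) by auto
  moreover have "d dvd 1" if "\<forall>i. d dvd coeff g i" for d
  proof -
    have "[:d:] dvd g" using that by (simp add: const_poly_dvd_iff)
    then have "[:d:] dvd f" using assms(2) by (rule dvd_trans)
    then have "\<forall>i. d dvd coeff f i" by (simp add: const_poly_dvd_iff)
    then show ?thesis using assms(1) unfolding primitive_poly_def by blast
  qed
  ultimately show ?thesis unfolding primitive_poly_def by blast
qed

lemma prim_deg:
  assumes "primitive_poly (f::'a::idom poly)" "\<not> f dvd 1"
  shows "degree f \<ge> 1"
proof (rule ccontr)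
  assume "\<not> degree f \<ge> 1"
  then have "degree f = 0" by simp
  from prim_const_unit[OF assms(1) this] assms(2) show False by simp
qed

lemma deg_nonunit: "degree (f::'a::idom poly) \<ge> 1 \<Longrightarrow> \<not> f dvd 1"
proof
  assume "degree f \<ge> 1" "f dvd 1"
  then show False using unit_deg0[of f] by simp
qed

lemma atomic_intro:
  "f \<noteq> 0 \<Longrightarrow> \<not> f dvd 1 \<Longrightarrow> xs \<noteq> [] \<Longrightarrow> \<forall>x\<in>set xs. irreducible x \<Longrightarrow> f = prod_list xs
   \<Longrightarrow> atomic_elem f"
  unfolding atomic_elem_def by blast

lemma prim_atomic:
  "primitive_poly (f::'a::idom poly) \<Longrightarrow> degree f \<ge> 1 \<Longrightarrow> atomic_elem f"
proof (induction "degree f" arbitrary: f rule: less_induct)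
  case less
  have f0: "f \<noteq> 0" using less.prems unfolding primitive_poly_def by blast
  have nu: "\<not> f dvd 1" using less.prems(2) by (rule deg_nonunit)
  show ?case
  proof (cases "irreducible f")
    case True
    then show ?thesis using atomic_intro[OF f0 nu, of "[f]"] by simp
  next
    case False
    then obtain g h where gh: "f = g * h" "\<not> g dvd 1" "\<not> h dvd 1"
      using f0 nu unfolding irreducible_def by blast
    have pg: "primitive_poly g" using prim_dvd[OF less.prems(1)] gh by simp
    have ph: "primitive_poly h" using prim_dvd[OF less.prems(1)] gh by simp
    have dg: "degree g \<ge> 1" using prim_deg[OF pg gh(2)] .
    have dh: "degree h \<ge> 1" using prim_deg[OF ph gh(3)] .
    have g0: "g \<noteq> 0" "h \<noteq> 0" using f0 gh by auto
    have df: "degree f = degree g + degree h" using gh g0 by (simp add: degree_mult_eq)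
    have ag: "atomic_elem g" using less.hyps[OF _ pg dg] df dh by simp
    have ah: "atomic_elem h" using less.hyps[OF _ ph dh] df dg by simp
    obtain xs where xs: "xs \<noteq> []" "\<forall>x\<in>set xs. irreducible x" "g = prod_list xs"
      using ag unfolding atomic_elem_def by blast
    obtain ys where ys: "ys \<noteq> []" "\<forall>x\<in>set ys. irreducible x" "h = prod_list ys"
      using ah unfolding atomic_elem_def by blast
    have "f = prod_list (xs @ ys)" using gh(1) xs(3) ys(3) by simp
    moreover have "xs @ ys \<noteq> []" using xs(1) by simp
    moreover have "\<forall>x\<in>set (xs @ ys). irreducible x" using xs(2) ys(2) by auto
    ultimately show ?thesis using atomic_intro[OF f0 nu] by blast
  qed
qed

lemma irr_nonconst:
  assumes am: "antimatter_domain TYPE('a::idom)" and irr: "irreducible (p::'a poly)"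
  shows "degree p \<ge> 1"
proof (rule ccontr)
  assume "\<not> degree p \<ge> 1"
  then have "degree p = 0" by simp
  then obtain c where c: "p = [:c:]" by (rule degree_eq_zeroE)
  have "irreducible c"
    unfolding irreducible_def
  proof (intro conjI allI impI)
    show "c \<noteq> 0" using irr c by auto
    have "\<not> p dvd 1" using irr by (simp add: irreducible_def)
    then show "\<not> c dvd 1" using c by (simp add: is_unit_const_poly_iff)
    fix a b assume "c = a * b"
    then have "p = [:a:] * [:b:]" using c by simp
    then have "[:a:] dvd 1 \<or> [:b:] dvd 1" using irr unfolding irreducible_def by blast
    then show "a dvd 1 \<or> b dvd 1" by (simp add: is_unit_const_poly_iff)
  qed
  then show False using am unfolding antimatter_domain_def by blast
qed

lemma irr_prim:
  assumes am: "antimatter_domain TYPE('a::idom)" and irr: "irreducible (p::'a poly)"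
  shows "primitive_poly p"
  unfolding primitive_poly_def
proof (intro conjI allI impI)
  show "p \<noteq> 0" using irr by auto
  fix d :: 'a assume "\<forall>i. d dvd coeff p i"
  then have "[:d:] dvd p" by (simp add: const_poly_dvd_iff)
  then obtain q where q: "p = [:d:] * q" by blast
  have "[:d:] dvd 1 \<or> q dvd 1" using irr q unfolding irreducible_def by blast
  moreover have "\<not> q dvd 1"
  proof
    assume "q dvd 1"
    then have "degree q = 0" by (rule unit_deg0)
    then have "degree p = 0" using q by simp
    then show False using irr_nonconst[OF am irr] by simp
  qed
  ultimately show "d dvd 1" by (simp add: is_unit_const_poly_iff)
qed

lemma GL_prod_list:
  assumes "GL_domain TYPE('a::idom)" "\<forall>x\<in>set xs. primitive_poly (x::'a poly)"
  shows "primitive_poly (prod_list xs)"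
  using assms(2)
proof (induction xs)
  case Nil
  then show ?case unfolding primitive_poly_def by (auto simp: coeff_1 split: if_splits)
next
  case (Cons a xs)
  then show ?case using assms(1) unfolding GL_domain_def by simp
qed

lemma mem_dvd_prod_list: "x \<in> set xs \<Longrightarrow> x dvd prod_list (xs::'a::comm_monoid_mult list)"
  by (induction xs) auto

lemma unit_times_prim:
  assumes "(f::'a::idom poly) dvd 1" "primitive_poly g"
  shows "primitive_poly (f * g)"
  unfolding primitive_poly_def
proof (intro conjI allI impI)
  show "f * g \<noteq> 0" using assms unfolding primitive_poly_def by auto
  fix d :: 'a assume "\<forall>i. d dvd coeff (f * g) i"
  then have "[:d:] dvd f * g" by (simp add: const_poly_dvd_iff)
  moreover obtain u where u: "1 = f * u" using assms(1) by (rule dvdE)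
  moreover have "g = (f * g) * u" using u by (metis mult.assoc mult.commute mult_1_right)
  ultimately have "[:d:] dvd g" by (metis dvd_mult2)
  then have "\<forall>i. d dvd coeff g i" by (simp add: const_poly_dvd_iff)
  then show "d dvd 1" using assms(2) unfolding primitive_poly_def by blast
qed

theorem proposition4p1:
  assumes "antimatter_domain TYPE('a::idom)"
  shows "GL_domain TYPE('a) \<longleftrightarrow> completely_atomic TYPE('a poly)"
proof
  assume gl: "GL_domain TYPE('a)"
  show "completely_atomic TYPE('a poly)"
    unfolding completely_atomic_def
  proof (intro allI impI, elim conjE)
    fix a b :: "'a poly"
    assume aa: "atomic_elem a" and ba: "b dvd a" and bu: "\<not> b dvd 1"
    obtain xs where xs: "\<forall>x\<in>set xs. irreducible x" "a = prod_list xs"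
      using aa unfolding atomic_elem_def by blast
    have "\<forall>x\<in>set xs. primitive_poly x" using xs(1) irr_prim[OF assms] by blast
    then have "primitive_poly a" using xs(2) GL_prod_list[OF gl] by simp
    then have pb: "primitive_poly b" using ba by (rule prim_dvd)
    have "degree b \<ge> 1" using prim_deg[OF pb bu] .
    then show "atomic_elem b" using prim_atomic[OF pb] by simp
  qed
next
  assume ca: "completely_atomic TYPE('a poly)"
  show "GL_domain TYPE('a)"
    unfolding GL_domain_def
  proof (intro allI impI, elim conjE)
    fix f g :: "'a poly"
    assume pf: "primitive_poly f" and pg: "primitive_poly g"
    show "primitive_poly (f * g)"
    proof (cases "degree f = 0 \<or> degree g = 0")
      case True
      then show ?thesis
      proof
        assume "degree f = 0"
        then show ?thesis using unit_times_prim prim_const_unit pf pg by blast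
      next
        assume "degree g = 0"
        then show ?thesis using unit_times_prim prim_const_unit pf pg
          by (metis mult.commute)
      qed
    next
      case False
      have af: "atomic_elem f" using prim_atomic[OF pf] False by simp
      have ag: "atomic_elem g" using prim_atomic[OF pg] False by simp
      obtain xs where xs: "xs \<noteq> []" "\<forall>x\<in>set xs. irreducible x" "f = prod_list xs"
        using af unfolding atomic_elem_def by blast
      obtain ys where ys: "ys \<noteq> []" "\<forall>x\<in>set ys. irreducible x" "g = prod_list ys"
        using ag unfolding atomic_elem_def by blast
      have fg0: "f * g \<noteq> 0" using pf pg unfolding primitive_poly_def by auto
      have "\<not> f dvd 1" using af unfolding atomic_elem_def by blast
      then have fgu: "\<not> f * g dvd 1" using dvd_mult_left by blast
      have "f * g = prod_list (xs @ ys)" using xs(3) ys(3) by simp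
      moreover have "xs @ ys \<noteq> []" using xs(1) by simp
      moreover have "\<forall>x\<in>set (xs @ ys). irreducible x" using xs(2) ys(2) by auto
      ultimately have afg: "atomic_elem (f * g)" using atomic_intro[OF fg0 fgu] by blast
      show ?thesis unfolding primitive_poly_def
      proof (intro conjI allI impI)
        show "f * g \<noteq> 0" by (rule fg0)
        fix d :: 'a assume "\<forall>i. d dvd coeff (f * g) i"
        then have dd: "[:d:] dvd f * g" by (simp add: const_poly_dvd_iff)
        show "d dvd 1"
        proof (rule ccontr)
          assume "\<not> d dvd 1"
          then have "\<not> [:d:] dvd 1" by (simp add: is_unit_const_poly_iff)
          then have "atomic_elem [:d:]" using ca afg dd unfolding completely_atomic_def by blast
          then obtain zs where zs: "zs \<noteq> []" "\<forall>x\<in>set zs. irreducible x" "[:d:] = prod_list zs"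
            and d0: "[:d:] \<noteq> 0"
            unfolding atomic_elem_def by blast
          obtain z where z: "z \<in> set zs" using zs(1) by (cases zs) auto
          have "z dvd [:d:]" using zs(3) mem_dvd_prod_list[OF z] by simp
          then have "degree z = 0" using dvd_imp_degree_le[OF _ d0] by simp
          moreover have "degree z \<ge> 1" using irr_nonconst[OF assms] zs(2) z by blast
          ultimately show False by simp
        qed
      qed
    qed
  qed
qed

end
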